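(* Let $\mathcal{K}$ be a consistent statistical $\mathcal{ALC}$ knowledge base and $C, D$ $\mathcal{ALC}$ concepts. Then: (1) for all rationals $0 \le \ell \le u \le 1$: $\mathcal{K} \models_l (C \mid D)[\ell,u]$ iff $\{\kappa \in \mathcal{K} \mid \kappa \rightleftharpoons^* (C \mid D)[\ell,u]\} \models_l (C \mid D)[\ell,u]$; (2) for all $m, M$: $\mathcal{K} \models_p (C \mid D)[m,M]$ iff $\{\kappa \in \mathcal{K} \mid \kappa \rightleftharpoons^* (C \mid D)\} \models_p (C \mid D)[m,M]$.
   Context: $\mathcal{ALC}$ concepts over disjoint sets $N_C$, $N_R$: $C ::= \top \mid A \mid \neg C \mid C \sqcap C \mid \exists r.C$, standard semantics. Interpretations $\mathcal{I} = (\Delta^{\mathcal{I}}, \cdot^{\mathcal{I}})$ have non-empty finite domain; $[X]^{\mathcal{I}} := |X^{\mathcal{I}}|$. A conditional is $(C \mid D)[\ell,u]$ with concepts $C,D$ and rationals $0 \le \ell \le u \le 1$; $\mathcal{I} \models (C \mid D)[\ell,u]$ iff $[D]^{\mathcal{I}} = 0$ or $[C \sqcap D]^{\mathcal{I}}/[D]^{\mathcal{I}} \in [\ell,u]$. A statistical $\mathcal{ALC}$ knowledge base $\mathcal{K}$ is a finite set of conditionals; $\mathrm{Mod}(\mathcal{K})$ is its set of finite models; consistent means $\mathrm{Mod}(\mathcal{K}) \ne \emptyset$. $\mathcal{K} \models_l (C\mid D)[\ell,u]$ iff every model of $\mathcal{K}$ satisfies $(C\mid D)[\ell,u]$. A query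 is an expression $(C \mid D)$. $\mathcal{K} \models_p (C \mid D)[m,M]$ means: some $\mathcal{I} \in \mathrm{Mod}(\mathcal{K})$ has $[D]^{\mathcal{I}} > 0$, and $m$, $M$ are respectively the infimum and supremum of $[C \sqcap D]^{\mathcal{I}}/[D]^{\mathcal{I}}$ over all $\mathcal{I} \in \mathrm{Mod}(\mathcal{K})$ with $[D]^{\mathcal{I}} > 0$. For a concept $C$, $\mathrm{Sig}(C)$ is the set of concept and role names occurring in $C$; the signature of a conditional $(C\mid D)[\ell,u]$ or a query $(C \mid D)$ is $\mathrm{Sig}(C) \cup \mathrm{Sig}(D)$. Two conditionals/queries are directly connected ($\rightleftharpoons$) iff their signatures intersect; $\rightleftharpoons^*$ is the transitive closure of $\rightleftharpoons$ (taken over the conditionals of $\mathcal{K}$ together with the given conditional or query), so $\kappa \rightleftharpoons^* q$ means there is a chain from $\kappa$ to $q$ of consecutive directly connected elements. *)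

theory Defs
  imports Complex_Main
begin

datatype ('c, 'r) concept =
    Top
  | Atom 'c
  | Neg "('c, 'r) concept"
  | And "('c, 'r) concept" "('c, 'r) concept"
  | Ex 'r "('c, 'r) concept"

text \<open>Interpretations. Every finite interpretation is isomorphic to one whose
domain is a finite subset of nat, so we take nat as the universe of individuals.\<close>

record ('c, 'r) interp =
  dom  :: "nat set"
  cint :: "'c \<Rightarrow> nat set"
  rint :: "'r \<Rightarrow> (nat \<times> nat) set"

definition wf_interp :: "('c, 'r) interp \<Rightarrow> bool" where
  "wf_interp I \<longleftrightarrow> finite (dom I) \<and> dom I \<noteq> {}
     \<and> (\<forall>A. cint I A \<subseteq> dom I) \<and> (\<forall>r. rint I r \<subseteq> dom I \<times> dom I)"

fun ext :: "('c, 'r) interp \<Rightarrow> ('c, 'r) concept \<Rightarrow> nat set" where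
  "ext I Top = dom I"
| "ext I (Atom A) = cint I A"
| "ext I (Neg C) = dom I - ext I C"
| "ext I (And C D) = ext I C \<inter> ext I D"
| "ext I (Ex r C) = {x \<in> dom I. \<exists>y. (x, y) \<in> rint I r \<and> y \<in> ext I C}"

definition cnt :: "('c, 'r) interp \<Rightarrow> ('c, 'r) concept \<Rightarrow> nat" where
  "cnt I X = card (ext I X)"

text \<open>A conditional (C | D)[l,u] is represented as the tuple (C, D, l, u).\<close>
type_synonym ('c, 'r) cond = "('c, 'r) concept \<times> ('c, 'r) concept \<times> rat \<times> rat"

definition valid_bounds :: "('c, 'r) cond \<Rightarrow> bool" where
  "valid_bounds k = (case k of (C, D, l, u) \<Rightarrow> 0 \<le> l \<and> l \<le> u \<and> u \<le> 1)"

definition ratio :: "('c, 'r) interp \<Rightarrow> ('c, 'r) concept \<Rightarrow> ('c, 'r) concept \<Rightarrow> real" where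
  "ratio I C D = real (cnt I (And C D)) / real (cnt I D)"

definition sat :: "('c, 'r) interp \<Rightarrow> ('c, 'r) cond \<Rightarrow> bool" where
  "sat I k = (case k of (C, D, l, u) \<Rightarrow>
      cnt I D = 0 \<or> (real_of_rat l \<le> ratio I C D \<and> ratio I C D \<le> real_of_rat u))"

definition is_KB :: "('c, 'r) cond set \<Rightarrow> bool" where
  "is_KB K \<longleftrightarrow> finite K \<and> (\<forall>k\<in>K. valid_bounds k)"

definition Mod :: "('c, 'r) cond set \<Rightarrow> ('c, 'r) interp set" where
  "Mod K = {I. wf_interp I \<and> (\<forall>k\<in>K. sat I k)}"

definition consistent :: "('c, 'r) cond set \<Rightarrow> bool" where
  "consistent K \<longleftrightarrow> Mod K \<noteq> {}"

definition entails_l :: "('c, 'r) cond set \<Rightarrow> ('c, 'r) cond \<Rightarrow> bool" where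
  "entails_l K k \<longleftrightarrow> (\<forall>I\<in>Mod K. sat I k)"

definition entails_p :: "('c, 'r) cond set \<Rightarrow> ('c, 'r) concept \<Rightarrow> ('c, 'r) concept
    \<Rightarrow> real \<Rightarrow> real \<Rightarrow> bool" where
  "entails_p K C D m M \<longleftrightarrow>
     (\<exists>I\<in>Mod K. cnt I D > 0) \<and>
     m = Inf {ratio I C D | I. I \<in> Mod K \<and> cnt I D > 0} \<and>
     M = Sup {ratio I C D | I. I \<in> Mod K \<and> cnt I D > 0}"

fun csig :: "('c, 'r) concept \<Rightarrow> ('c + 'r) set" where
  "csig Top = {}"
| "csig (Atom A) = {Inl A}"
| "csig (Neg C) = csig C"
| "csig (And C D) = csig C \<union> csig D"
| "csig (Ex r C) = {Inr r} \<union> csig C"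

definition qsig :: "('c, 'r) concept \<Rightarrow> ('c, 'r) concept \<Rightarrow> ('c + 'r) set" where
  "qsig C D = csig C \<union> csig D"

definition ksig :: "('c, 'r) cond \<Rightarrow> ('c + 'r) set" where
  "ksig k = (case k of (C, D, l, u) \<Rightarrow> qsig C D)"

text \<open>Items are the conditionals of K together with the query/conditional q,
  tagged Inl (conditional of K) / Inr () (the query q). Two items are directly
  connected iff their signatures intersect; \<rightleftharpoons>* is the transitive closure.\<close>

definition item_sig :: "('c, 'r) cond set \<Rightarrow> ('c + 'r) set \<Rightarrow> (('c, 'r) cond + unit) \<Rightarrow> ('c + 'r) set" where
  "item_sig K s x = (case x of Inl k \<Rightarrow> ksig k | Inr _ \<Rightarrow> s)"

definition direct_conn :: "('c, 'r) cond set \<Rightarrow> ('c + 'r) set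
    \<Rightarrow> ((('c, 'r) cond + unit) \<times> (('c, 'r) cond + unit)) set" where
  "direct_conn K s = {(x, y). x \<in> Inl ` K \<union> {Inr ()} \<and> y \<in> Inl ` K \<union> {Inr ()}
      \<and> item_sig K s x \<inter> item_sig K s y \<noteq> {}}"

definition conn :: "('c, 'r) cond set \<Rightarrow> ('c + 'r) set \<Rightarrow> ('c, 'r) cond \<Rightarrow> bool" where
  "conn K s k \<longleftrightarrow> (Inl k, Inr ()) \<in> (direct_conn K s)\<^sup>+"

end

theory Submission
  imports Defs "HOL-Library.Nat_Bijection"
begin

definition prodI :: "('c,'r) interp \<Rightarrow> ('c,'r) interp \<Rightarrow> ('c + 'r) set \<Rightarrow> ('c,'r) interp" where
  "prodI I J S = \<lparr>dom = prod_encode ` (dom I \<times> dom J),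
     cint = (\<lambda>A. if Inl A \<in> S then prod_encode ` (dom I \<times> cint J A) else prod_encode ` (cint I A \<times> dom J)),
     rint = (\<lambda>r. if Inr r \<in> S then {(prod_encode (a,b), prod_encode (a,b')) | a b b'. a \<in> dom I \<and> (b,b') \<in> rint J r}
                 else {(prod_encode (a,b), prod_encode (a',b)) | a a' b. (a,a') \<in> rint I r \<and> b \<in> dom J})\<rparr>"

lemma ext_sub: "wf_interp I \<Longrightarrow> ext I C \<subseteq> dom I"
  by (induction C) (auto simp: wf_interp_def)

lemma pe_inj[simp]: "prod_encode x = prod_encode y \<longleftrightarrow> x = y"
  using inj_prod_encode by (auto dest: injD)

lemma ext1: "wf_interp I \<Longrightarrow> wf_interp J \<Longrightarrow> csig C \<inter> S = {} \<Longrightarrow>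
   ext (prodI I J S) C = prod_encode ` (ext I C \<times> dom J)"
proof (induction C)
  case (Neg C)
  then show ?case using ext_sub[OF Neg.prems(1), of C] by (auto simp: prodI_def)
next
  case (And C1 C2)
  then have "csig C1 \<inter> S = {}" "csig C2 \<inter> S = {}" by auto
  with And show ?case by auto
next
  case (Ex r C)
  have sub: "ext I C \<subseteq> dom I" using ext_sub[OF Ex.prems(1)] .
  from Ex show ?case using sub
    by (auto simp: prodI_def wf_interp_def) (blast+)
qed (auto simp: prodI_def)

lemma ext2: "wf_interp I \<Longrightarrow> wf_interp J \<Longrightarrow> csig C \<subseteq> S \<Longrightarrow>
   ext (prodI I J S) C = prod_encode ` (dom I \<times> ext J C)"
proof (induction C)
  case (Neg C)
  then show ?case using ext_sub[OF Neg.prems(2), of C] by (auto simp: prodI_def)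
next
  case (And C1 C2)
  then have "csig C1 \<subseteq> S" "csig C2 \<subseteq> S" by auto
  with And show ?case by auto
next
  case (Ex r C)
  have sub: "ext J C \<subseteq> dom J" using ext_sub[OF Ex.prems(2)] .
  from Ex show ?case using sub
    by (auto simp: prodI_def wf_interp_def) (blast+)
qed (auto simp: prodI_def)

lemma card_pe: "card (prod_encode ` (A \<times> B)) = card A * card B"
  by (simp add: card_image inj_on_def card_cartesian_product)

lemma wf_prod: "wf_interp I \<Longrightarrow> wf_interp J \<Longrightarrow> wf_interp (prodI I J S)"
  unfolding wf_interp_def prodI_def by (auto 0 4 intro!: imageI)

lemma sat1:
  assumes "wf_interp I" "wf_interp J" "qsig C D \<inter> S = {}"
  shows "sat (prodI I J S) (C, D, l, u) = sat I (C, D, l, u)"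
    and "ratio (prodI I J S) C D = ratio I C D"
    and "cnt (prodI I J S) D > 0 \<longleftrightarrow> cnt I D > 0"
proof -
  have n: "card (dom J) > 0" using assms(2) by (auto simp: wf_interp_def)
  have c1: "cnt (prodI I J S) (And C D) = cnt I (And C D) * card (dom J)"
    using assms by (simp add: cnt_def ext1 card_pe qsig_def Int_Un_distrib2 del: ext.simps)
  have c2: "cnt (prodI I J S) D = cnt I D * card (dom J)"
    using assms by (simp add: cnt_def ext1 card_pe qsig_def Int_Un_distrib2)
  show r: "ratio (prodI I J S) C D = ratio I C D"
    using n unfolding ratio_def c1 c2 by simp
  show "cnt (prodI I J S) D > 0 \<longleftrightarrow> cnt I D > 0" using c2 n by simp
  show "sat (prodI I J S) (C, D, l, u) = sat I (C, D, l, u)"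
    unfolding sat_def using r c2 n by simp
qed

lemma sat2:
  assumes "wf_interp I" "wf_interp J" "qsig C D \<subseteq> S"
  shows "sat (prodI I J S) (C, D, l, u) = sat J (C, D, l, u)"
proof -
  have n: "card (dom I) > 0" using assms(1) by (auto simp: wf_interp_def)
  have c1: "cnt (prodI I J S) (And C D) = card (dom I) * cnt J (And C D)"
    using assms by (simp add: cnt_def ext2 card_pe qsig_def del: ext.simps)
  have c2: "cnt (prodI I J S) D = card (dom I) * cnt J D"
    using assms by (simp add: cnt_def ext2 card_pe qsig_def)
  have r: "ratio (prodI I J S) C D = ratio J C D"
    using n unfolding ratio_def c1 c2 by simp
  show ?thesis
    unfolding sat_def using r c2 n by simp
qed

lemma conn_disj:
  assumes "k \<in> K" "\<not> conn K s k"
  shows "ksig k \<inter> s = {}" and "\<And>k'. k' \<in> K \<Longrightarrow> conn K s k' \<Longrightarrow> ksig k \<inter> ksig k' = {}"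
proof -
  show "ksig k \<inter> s = {}"
  proof (rule ccontr)
    assume "ksig k \<inter> s \<noteq> {}"
    then have "(Inl k, Inr ()) \<in> direct_conn K s" using assms(1)
      by (auto simp: direct_conn_def item_sig_def)
    then show False using assms(2) by (auto simp: conn_def)
  qed
  fix k' assume k': "k' \<in> K" "conn K s k'"
  show "ksig k \<inter> ksig k' = {}"
  proof (rule ccontr)
    assume "ksig k \<inter> ksig k' \<noteq> {}"
    then have "(Inl k, Inl k') \<in> direct_conn K s" using assms(1) k'(1)
      by (auto simp: direct_conn_def item_sig_def)
    then have "(Inl k, Inr ()) \<in> (direct_conn K s)\<^sup>+" using k'(2)
      by (auto simp: conn_def intro: trancl_into_trancl2)
    then show False using assms(2) by (auto simp: conn_def)
  qed
qed

lemma main_lift: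
  fixes K :: "('c, 'r) cond set" and C D :: "('c, 'r) concept"
  assumes "consistent K" and I: "I \<in> Mod {k \<in> K. conn K (qsig C D) k}"
  shows "\<exists>P \<in> Mod K. (\<forall>l u. sat P (C, D, l, u) = sat I (C, D, l, u))
          \<and> ratio P C D = ratio I C D \<and> (cnt P D > 0 \<longleftrightarrow> cnt I D > 0)"
proof -
  let ?s = "qsig C D"
  define S where "S = (\<Union>k\<in>{k \<in> K. \<not> conn K ?s k}. ksig k)"
  obtain J where J: "J \<in> Mod K" using assms(1) by (auto simp: consistent_def)
  have wI: "wf_interp I" and wJ: "wf_interp J" using I J by (auto simp: Mod_def)
  have qS: "?s \<inter> S = {}" using conn_disj(1) by (fastforce simp: S_def)
  define P where "P = prodI I J S"
  have "P \<in> Mod K"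
    unfolding Mod_def
  proof (intro CollectI conjI ballI)
    show "wf_interp P" using wf_prod[OF wI wJ] by (simp add: P_def)
    fix k assume k: "k \<in> K"
    obtain C' D' l u where kk: "k = (C', D', l, u)" by (cases k) auto
    show "sat P k"
    proof (cases "conn K ?s k")
      case True
      have "qsig C' D' \<inter> S = {}" using conn_disj(2)[of _ K ?s k] k True
        by (fastforce simp: S_def kk ksig_def)
      then show ?thesis using sat1(1)[OF wI wJ] I k True by (auto simp: P_def kk Mod_def)
    next
      case False
      have "qsig C' D' \<subseteq> S" using k False by (auto simp: S_def kk ksig_def)
      then show ?thesis using sat2[OF wI wJ] J k by (auto simp: P_def kk Mod_def)
    qed
  qed
  then show ?thesis using sat1[OF wI wJ qS] unfolding P_def by (intro bexI[of _ "prodI I J S"]) auto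
qed

lemma Mod_mono: "A \<subseteq> B \<Longrightarrow> Mod B \<subseteq> Mod A"
  by (auto simp: Mod_def)

theorem proposition4:
  fixes K :: "('c, 'r) cond set" and C D :: "('c, 'r) concept"
  assumes "is_KB K" and "consistent K"
  shows "(\<forall>l u :: rat. 0 \<le> l \<and> l \<le> u \<and> u \<le> 1 \<longrightarrow>
            (entails_l K (C, D, l, u) \<longleftrightarrow>
             entails_l {k \<in> K. conn K (qsig C D) k} (C, D, l, u)))
       \<and> (\<forall>m M :: real. entails_p K C D m M \<longleftrightarrow>
             entails_p {k \<in> K. conn K (qsig C D) k} C D m M)"
proof -
  let ?K' = "{k \<in> K. conn K (qsig C D) k}"
  have sub: "Mod K \<subseteq> Mod ?K'" by (rule Mod_mono) auto
  have A: "\<And>l u. entails_l K (C, D, l, u) \<longleftrightarrow> entails_l ?K' (C, D, l, u)"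
  proof
    fix l u
    assume h: "entails_l K (C, D, l, u)"
    show "entails_l ?K' (C, D, l, u)" unfolding entails_l_def
    proof
      fix I assume "I \<in> Mod ?K'"
      from main_lift[OF assms(2) this] h show "sat I (C, D, l, u)"
        by (auto simp: entails_l_def)
    qed
  next
    fix l u
    show "entails_l ?K' (C, D, l, u) \<Longrightarrow> entails_l K (C, D, l, u)"
      using sub by (auto simp: entails_l_def)
  qed
  have E: "{ratio I C D | I. I \<in> Mod K \<and> cnt I D > 0} = {ratio I C D | I. I \<in> Mod ?K' \<and> cnt I D > 0}"
  proof
    show "{ratio I C D | I. I \<in> Mod K \<and> cnt I D > 0} \<subseteq> {ratio I C D | I. I \<in> Mod ?K' \<and> cnt I D > 0}"
      using sub by blast
    show "{ratio I C D | I. I \<in> Mod ?K' \<and> cnt I D > 0} \<subseteq> {ratio I C D | I. I \<in> Mod K \<and> cnt I D > 0}"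
    proof
      fix x assume "x \<in> {ratio I C D | I. I \<in> Mod ?K' \<and> cnt I D > 0}"
      then obtain I where I: "I \<in> Mod ?K'" "cnt I D > 0" "x = ratio I C D" by blast
      have "\<exists>P\<in>Mod K. ratio P C D = x \<and> cnt P D > 0"
        using main_lift[OF assms(2) I(1)] I(2,3) by auto
      then show "x \<in> {ratio I C D | I. I \<in> Mod K \<and> cnt I D > 0}" by blast
    qed
  qed
  have Ex: "(\<exists>I\<in>Mod K. cnt I D > 0) \<longleftrightarrow> (\<exists>I\<in>Mod ?K'. cnt I D > 0)"
  proof
    assume "\<exists>I\<in>Mod ?K'. cnt I D > 0"
    then obtain I where "I \<in> Mod ?K'" "cnt I D > 0" by blast
    with main_lift[OF assms(2) this(1)] show "\<exists>I\<in>Mod K. cnt I D > 0" by auto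
  qed (use sub in blast)
  show ?thesis using A E Ex unfolding entails_p_def by simp
qed

end
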